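(* The ind-scheme $\mathcal M^\infty=\bigcup_N\mathcal M^N$ is Zariski-dense in $L^-\mathrm{GL}_K$; i.e., a function in $\mathbb C[L^-\mathrm{GL}_K]$ vanishing on $\mathcal M^N$ for every $N$ is zero.
   Context: $\mathcal M(N,K)=\mathrm{Rep}(N,K)/\!/\mathrm{GL}_N$, $\mathrm{Rep}(N,K)$ being triples $(B,\psi,\overline\psi)$ with $B\in\mathrm{Mat}_{N\times N}(\mathbb C)$, $\psi\in\mathrm{Mat}_{N\times K}$, $\overline\psi\in\mathrm{Mat}_{K\times N}$, and $g\cdot(B,\psi,\overline\psi)=(gBg^{-1},g\psi,\overline\psi g^{-1})$. $L^-\mathrm{GL}_K$ is the group scheme of power series $1+\sum_{i\ge1}g_iz^{-i}$, $g_i\in\mathfrak{gl}_K$, with coordinate ring $\mathbb C[T^{(n)}_{ab}:n\ge0,1\le a,b\le K]$, $T^{(n)}_{ab}$ being the $(a,b)$ entry of $g_{n+1}$. Let $\pi_N:\mathcal M(N,K)\to L^-\mathrm{GL}_K$, $(B,\psi,\overline\psi)\mapsto1+\overline\psi(z-\widetilde B/2)^{-1}\psi=1+\sum_{i\ge1}2^{1-i}\overline\psi\widetilde B^{i-1}\psi z^{-i}$, where $\widetilde B=B+\psi\overline\psi$. $\mathcal M^N\subset L^-\mathrm{GL}_K$ is the scheme-theoretic image of $\pi_N$; $\mathcal M^N\subset\mathcal M^{N'}$ for $N<N'$. *)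

theory Defs
  imports Complex_Main "HOL-Library.Poly_Mapping" "Jordan_Normal_Form.Matrix"
begin

text \<open>Coordinates of the loop group L^- GL_K: the variable (n,a,b) stands for
  T^(n)_(a,b), the (a,b) entry of g_(n+1); matrix indices are 0-based, a,b < K.\<close>
type_synonym loopvar = "nat \<times> nat \<times> nat"

type_synonym loop_poly = "(loopvar \<Rightarrow>\<^sub>0 nat) \<Rightarrow>\<^sub>0 complex"

definition peval :: "loop_poly \<Rightarrow> (loopvar \<Rightarrow> complex) \<Rightarrow> complex" where
  "peval p x = (\<Sum>m\<in>Poly_Mapping.keys p. Poly_Mapping.lookup p m * (\<Prod>v\<in>Poly_Mapping.keys m. x v ^ Poly_Mapping.lookup m v))"

definition in_coord_ring :: "nat \<Rightarrow> loop_poly \<Rightarrow> bool" where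
  "in_coord_ring K p \<longleftrightarrow> (\<forall>m\<in>Poly_Mapping.keys p. \<forall>v\<in>Poly_Mapping.keys m. fst (snd v) < K \<and> snd (snd v) < K)"

text \<open>pi_N(B,psi,psibar) = 1 + sum_i 2^(1-i) psibar Bt^(i-1) psi z^-i, Bt = B + psi psibar;
  so T^(n)_(a,b) = 2^(-n) (psibar Bt^n psi)_(a,b).\<close>
definition pi_coord :: "complex mat \<Rightarrow> complex mat \<Rightarrow> complex mat \<Rightarrow> loopvar \<Rightarrow> complex" where
  "pi_coord B psi psibar v = (case v of (n, a, b) \<Rightarrow>
      (1/2) ^ n * (psibar * ((B + psi * psibar) ^\<^sub>m n) * psi) $$ (a, b))"

end

theory Submission
  imports Defs "HOL-Computational_Algebra.Polynomial"
begin

lemma uni_zero: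
  fixes a :: "nat \<Rightarrow> complex"
  assumes "finite I" "\<forall>y. (\<Sum>k\<in>I. a k * y^k) = 0"
  shows "\<forall>k\<in>I. a k = 0"
proof
  fix k assume k: "k \<in> I"
  define q where "q = (\<Sum>j\<in>I. monom (a j) j)"
  have "poly q y = 0" for y unfolding q_def poly_sum poly_monom by (rule spec[OF assms(2)])
  hence "q = 0" using poly_all_0_iff_0 by blast
  hence "coeff q k = 0" by simp
  moreover have "coeff q k = a k" unfolding q_def coeff_sum coeff_monom
    by (subst sum.delta[OF assms(1)]) (simp add: k)
  ultimately show "a k = 0" by simp
qed

lemma mv_zero:
  fixes V :: "'v set" and e :: "'m \<Rightarrow> 'v \<Rightarrow> nat"
  assumes "finite V"
  shows "\<And>S c. finite S \<Longrightarrow> (\<forall>m\<in>S. \<forall>m'\<in>S. (\<forall>v\<in>V. e m v = e m' v) \<longrightarrow> m = m') \<Longrightarrow>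
    (\<forall>x. (\<Sum>m\<in>S. c m * (\<Prod>v\<in>V. (x v :: complex) ^ e m v)) = 0) \<Longrightarrow> \<forall>m\<in>S. c m = 0"
  using assms
proof (induction V rule: finite_induct)
  case empty
  show ?case
  proof
    fix m assume m: "m \<in> S"
    have "S = {m}" using empty.prems(2) m by blast
    thus "c m = 0" using empty.prems(3) by simp
  qed
next
  case (insert w V)
  have coef: "\<forall>k\<in>(\<lambda>m. e m w) ` S. (\<Sum>m\<in>{m\<in>S. e m w = k}. c m * (\<Prod>v\<in>V. x v ^ e m v)) = 0" for x
  proof -
    have "\<forall>y. (\<Sum>k\<in>(\<lambda>m. e m w) ` S. (\<Sum>m\<in>{m\<in>S. e m w = k}. c m * (\<Prod>v\<in>V. x v ^ e m v)) * y ^ k) = 0"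
    proof
      fix y
      have "0 = (\<Sum>m\<in>S. c m * (\<Prod>v\<in>insert w V. (x(w:=y)) v ^ e m v))" by (rule sym, rule spec[OF insert.prems(3)])
      also have "\<dots> = (\<Sum>m\<in>S. c m * (\<Prod>v\<in>V. x v ^ e m v) * y ^ e m w)"
      proof (rule sum.cong[OF refl])
        fix m
        have "(\<Prod>v\<in>V. (x(w:=y)) v ^ e m v) = (\<Prod>v\<in>V. x v ^ e m v)"
          by (rule prod.cong[OF refl]) (use insert.hyps(2) in auto)
        thus "c m * (\<Prod>v\<in>insert w V. (x(w:=y)) v ^ e m v) = c m * (\<Prod>v\<in>V. x v ^ e m v) * y ^ e m w"
          using insert.hyps by (simp add: prod.insert_remove mult_ac)
      qed
      also have "\<dots> = (\<Sum>k\<in>(\<lambda>m. e m w) ` S. (\<Sum>m\<in>{m\<in>S. e m w = k}. c m * (\<Prod>v\<in>V. x v ^ e m v) * y ^ e m w))"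
        by (rule sum.image_gen[OF insert.prems(1)])
      also have "\<dots> = (\<Sum>k\<in>(\<lambda>m. e m w) ` S. (\<Sum>m\<in>{m\<in>S. e m w = k}. c m * (\<Prod>v\<in>V. x v ^ e m v)) * y ^ k)"
        by (rule sum.cong, simp) (simp add: sum_distrib_right)
      finally show "(\<Sum>k\<in>(\<lambda>m. e m w) ` S. (\<Sum>m\<in>{m\<in>S. e m w = k}. c m * (\<Prod>v\<in>V. x v ^ e m v)) * y ^ k) = 0" by simp
    qed
    thus ?thesis using uni_zero[of "(\<lambda>m. e m w) ` S" "\<lambda>k. (\<Sum>m\<in>{m\<in>S. e m w = k}. c m * (\<Prod>v\<in>V. x v ^ e m v))"] insert.prems(1) by blast
  qed
  show ?case
  proof
    fix m assume m: "m \<in> S"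
    let ?Sk = "{m'\<in>S. e m' w = e m w}"
    have "\<forall>m'\<in>?Sk. c m' = 0"
    proof (rule insert.IH)
      show "finite ?Sk" using insert.prems(1) by simp
      show "\<forall>m\<in>?Sk. \<forall>m'\<in>?Sk. (\<forall>v\<in>V. e m v = e m' v) \<longrightarrow> m = m'"
        using insert.prems(2) by auto
      show "\<forall>x. (\<Sum>m\<in>?Sk. c m * (\<Prod>v\<in>V. x v ^ e m v)) = 0"
        using coef m by blast
    qed
    thus "c m = 0" using m by simp
  qed
qed


definition shiftA :: "nat \<Rightarrow> nat \<Rightarrow> complex mat" where
  "shiftA N K = mat N N (\<lambda>(i,j). if i = j + K then 1 else 0)"

lemma shiftA_index[simp]: "i < N \<Longrightarrow> j < N \<Longrightarrow> shiftA N K $$ (i,j) = (if i = j + K then 1 else 0)"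
  by (simp add: shiftA_def)

lemma shiftA_carrier[simp]: "shiftA N K \<in> carrier_mat N N" "dim_row (shiftA N K) = N" "dim_col (shiftA N K) = N"
  by (auto simp: shiftA_def)

lemma shiftA_pow:
  assumes "i < N" "j < N"
  shows "(shiftA N K ^\<^sub>m n) $$ (i,j) = (if i = j + n * K then 1 else 0)"
  using assms
proof (induction n arbitrary: i j)
  case 0
  then show ?case by simp
next
  case (Suc n)
  have "(shiftA N K ^\<^sub>m Suc n) $$ (i,j) = (\<Sum>l\<in>{0..<N}. (shiftA N K ^\<^sub>m n) $$ (i,l) * shiftA N K $$ (l,j))"
    using Suc.prems by (simp add: scalar_prod_def)
  also have "\<dots> = (\<Sum>l\<in>{0..<N}. if l = j + K then (if i = l + n * K then 1 else 0) else 0)"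
    by (rule sum.cong, simp) (simp add: Suc.IH Suc.prems)
  also have "\<dots> = (if j + K < N then (if i = j + K + n * K then 1 else 0) else 0)"
    by (simp add: sum.delta)
  also have "\<dots> = (if i = j + Suc n * K then 1 else 0)"
    using Suc.prems by auto
  finally show ?case .
qed


lemma realize:
  fixes x :: "loopvar \<Rightarrow> complex" and K M :: nat
  shows "\<exists>N B psi psibar. B \<in> carrier_mat N N \<and> psi \<in> carrier_mat N K \<and> psibar \<in> carrier_mat K N \<and>
    (\<forall>n a b. n \<le> M \<longrightarrow> a < K \<longrightarrow> b < K \<longrightarrow> pi_coord B psi psibar (n,a,b) = x (n,a,b))"
proof -
  define N where "N = (M+1)*K"
  define A where "A = shiftA N K"
  define psi :: "complex mat" where "psi = mat N K (\<lambda>(i,j). if i = j then 1 else 0)"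
  define psibar :: "complex mat" where "psibar = mat K N (\<lambda>(a,i). 2^(i div K) * x (i div K, a, i mod K))"
  define B where "B = A - psi * psibar"
  have A: "A \<in> carrier_mat N N" by (simp add: A_def)
  have psi: "psi \<in> carrier_mat N K" by (simp add: psi_def)
  have psibar: "psibar \<in> carrier_mat K N" by (simp add: psibar_def)
  have Bc: "B \<in> carrier_mat N N" using A psi psibar by (simp add: B_def minus_carrier_mat)
  have BA: "B + psi * psibar = A"
    by (rule eq_matI) (use A psi psibar in \<open>auto simp: B_def\<close>)
  have KN: "K \<le> N" by (simp add: N_def)
  have "pi_coord B psi psibar (n,a,b) = x (n,a,b)" if n: "n \<le> M" and a: "a < K" and b: "b < K" for n a b
  proof -
    have bN: "b < N" using b KN by simp
    have lt: "b + n * K < N"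
    proof -
      have "b + n * K < K + n * K" using b by simp
      also have "\<dots> = (n+1) * K" by simp
      also have "\<dots> \<le> (M+1) * K" using n by (intro mult_right_mono) auto
      finally show ?thesis by (simp add: N_def)
    qed
    have pb: "(psibar * A ^\<^sub>m n) $$ (a,i) = (if i + n * K < N then psibar $$ (a, i + n*K) else 0)" if i: "i < N" for i
    proof -
      have "(psibar * A ^\<^sub>m n) $$ (a,i) = (\<Sum>l\<in>{0..<N}. psibar $$ (a,l) * (A ^\<^sub>m n) $$ (l,i))"
        using A psibar a i by (simp add: scalar_prod_def)
      also have "\<dots> = (\<Sum>l\<in>{0..<N}. if l = i + n * K then psibar $$ (a,l) else 0)"
        by (rule sum.cong, simp) (use i in \<open>simp add: A_def shiftA_pow\<close>)
      also have "\<dots> = (if i + n * K < N then psibar $$ (a, i + n*K) else 0)"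
        by (simp add: sum.delta)
      finally show ?thesis .
    qed
    have "(psibar * A ^\<^sub>m n * psi) $$ (a,b) = (\<Sum>i\<in>{0..<N}. (psibar * A ^\<^sub>m n) $$ (a,i) * psi $$ (i,b))"
      using A psi psibar a b by (simp add: scalar_prod_def)
    also have "\<dots> = (\<Sum>i\<in>{0..<N}. if i = b then (psibar * A ^\<^sub>m n) $$ (a,i) else 0)"
      by (rule sum.cong, simp) (use b in \<open>simp add: psi_def\<close>)
    also have "\<dots> = (psibar * A ^\<^sub>m n) $$ (a,b)" using bN by (simp add: sum.delta)
    also have "\<dots> = psibar $$ (a, b + n*K)" using pb[OF bN] lt by simp
    also have "\<dots> = 2^n * x (n, a, b)"
      using a b lt by (simp add: psibar_def)
    finally have e: "(psibar * A ^\<^sub>m n * psi) $$ (a,b) = 2^n * x (n, a, b)" .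
    show ?thesis unfolding pi_coord_def BA using e by (simp add: power_one_over)
  qed
  thus ?thesis using Bc psi psibar by blast
qed


theorem mainTheorem4:
  fixes K :: nat and p :: loop_poly
  assumes "in_coord_ring K p"
    and "\<forall>N B psi psibar. B \<in> carrier_mat N N \<longrightarrow> psi \<in> carrier_mat N K \<longrightarrow>
           psibar \<in> carrier_mat K N \<longrightarrow> peval p (pi_coord B psi psibar) = 0"
  shows "p = 0"
proof -
  define S where "S = Poly_Mapping.keys p"
  define V where "V = (\<Union>m\<in>S. Poly_Mapping.keys m)"
  define M where "M = Max (insert 0 (fst ` V))"
  have finS: "finite S" by (simp add: S_def)
  have finV: "finite V" by (simp add: V_def finS)
  have pe: "peval p x = (\<Sum>m\<in>S. Poly_Mapping.lookup p m * (\<Prod>v\<in>V. x v ^ Poly_Mapping.lookup m v))" for x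
    unfolding peval_def S_def
  proof (rule sum.cong[OF refl])
    fix m assume m: "m \<in> Poly_Mapping.keys p"
    have "(\<Prod>v\<in>Poly_Mapping.keys m. x v ^ Poly_Mapping.lookup m v) = (\<Prod>v\<in>V. x v ^ Poly_Mapping.lookup m v)"
    proof (rule prod.mono_neutral_left)
      show "finite V" by (rule finV)
      show "Poly_Mapping.keys m \<subseteq> V" using m unfolding V_def S_def by blast
      show "\<forall>i\<in>V - Poly_Mapping.keys m. x i ^ Poly_Mapping.lookup m i = 1"
        by (simp add: in_keys_iff)
    qed
    thus "Poly_Mapping.lookup p m * (\<Prod>v\<in>Poly_Mapping.keys m. x v ^ Poly_Mapping.lookup m v) =
          Poly_Mapping.lookup p m * (\<Prod>v\<in>V. x v ^ Poly_Mapping.lookup m v)" by simp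
  qed
  have allz: "\<forall>x. (\<Sum>m\<in>S. Poly_Mapping.lookup p m * (\<Prod>v\<in>V. x v ^ Poly_Mapping.lookup m v)) = 0"
  proof
    fix x :: "loopvar \<Rightarrow> complex"
    obtain N B psi psibar where c: "B \<in> carrier_mat N N" "psi \<in> carrier_mat N K" "psibar \<in> carrier_mat K N"
      and r: "\<forall>n a b. n \<le> M \<longrightarrow> a < K \<longrightarrow> b < K \<longrightarrow> pi_coord B psi psibar (n,a,b) = x (n,a,b)"
      using realize[of K M x] by blast
    have agree: "pi_coord B psi psibar v = x v" if v: "v \<in> V" for v
    proof -
      obtain n a b where vv: "v = (n,a,b)" by (cases v) auto
      have "n \<in> fst ` V" using v vv by (metis fst_conv image_eqI)
      hence "n \<le> M" unfolding M_def using finV by (intro Max_ge) auto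
      moreover have "a < K \<and> b < K"
      proof -
        obtain m where m: "m \<in> Poly_Mapping.keys p" "v \<in> Poly_Mapping.keys m" using v unfolding V_def S_def by blast
        thus ?thesis using assms(1) vv unfolding in_coord_ring_def by fastforce
      qed
      ultimately show ?thesis using r vv by simp
    qed
    have "(\<Sum>m\<in>S. Poly_Mapping.lookup p m * (\<Prod>v\<in>V. x v ^ Poly_Mapping.lookup m v)) =
          (\<Sum>m\<in>S. Poly_Mapping.lookup p m * (\<Prod>v\<in>V. pi_coord B psi psibar v ^ Poly_Mapping.lookup m v))"
      using agree by (auto intro!: sum.cong prod.cong)
    also have "\<dots> = peval p (pi_coord B psi psibar)" by (simp add: pe)
    also have "\<dots> = 0" using assms(2) c by blast
    finally show "(\<Sum>m\<in>S. Poly_Mapping.lookup p m * (\<Prod>v\<in>V. x v ^ Poly_Mapping.lookup m v)) = 0" .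
  qed
  have inj: "\<forall>m\<in>S. \<forall>m'\<in>S. (\<forall>v\<in>V. Poly_Mapping.lookup m v = Poly_Mapping.lookup m' v) \<longrightarrow> m = m'"
  proof (intro ballI impI)
    fix m m' assume m: "m \<in> S" and m': "m' \<in> S" and e: "\<forall>v\<in>V. Poly_Mapping.lookup m v = Poly_Mapping.lookup m' v"
    show "m = m'"
    proof (rule poly_mapping_eqI)
      fix v show "Poly_Mapping.lookup m v = Poly_Mapping.lookup m' v"
      proof (cases "v \<in> V")
        case True thus ?thesis using e by simp
      next
        case False
        hence "v \<notin> Poly_Mapping.keys m" "v \<notin> Poly_Mapping.keys m'" using m m' by (auto simp: V_def)
        thus ?thesis by (simp add: in_keys_iff)
      qed
    qed
  qed
  have z: "\<forall>m\<in>S. Poly_Mapping.lookup p m = 0"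
    by (rule mv_zero[where e="Poly_Mapping.lookup" and c="Poly_Mapping.lookup p", OF finV finS inj allz])
  show "p = 0"
    by (rule poly_mapping_eqI) (use z in \<open>auto simp: S_def in_keys_iff\<close>)
qed

end
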